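(* Assume the Lyapunov exponent $L:\mathbb{R}\to[0,\infty)$ is continuous. Then $L$ attains its minimum on $\mathbb{R}$, and for $P$-almost every $\omega\in\Omega$, $$0\le\liminf_{N\to\infty}\left(-\frac1N\log\mathcal{I}(N,\omega)\right)\le\limsup_{N\to\infty}\left(-\frac1N\log\mathcal{I}(N,\omega)\right)\le2\min_{E\in\mathbb{R}}L(E).$$
   Context: Let $(\Omega,\mathcal F,P)$ be a probability space and $\phi:\Omega\to\Omega$ a measurable bijection with measurable inverse that preserves $P$ and is ergodic (every $\phi$-invariant measurable set has probability $0$ or $1$). Let $f:\Omega\to\mathbb{R}$ be bounded and measurable, and put $v_\omega(n)=f(\phi^n\omega)$, $n\in\mathbb{Z}$. For $E\in\mathbb{R}$ let $T_{N,\omega}(E)=A_{N,\omega}(E)\cdots A_{1,\omega}(E)$ with $A_{n,\omega}(E)=\begin{pmatrix}v_\omega(n)-E&-1\\1&0\end{pmatrix}$; $\|\cdot\|$ is the operator norm. The Lyapunov exponent is $L(E)=\lim_{N\to\infty}\frac1N\int_\Omega\log\|T_{N,\omega}(E)\|\,dP(\omega)=\inf_{N\ge1}\frac1N\int_\Omega\log\|T_{N,\omega}(E)\|\,dP(\omega)$. Define $\mathcal{I}(N,\omega)=\int_{-\infty}^{\infty}\frac{dE}{\|T_{N,\omega}(E)\|^2}$. *)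

theory Defs
  imports "HOL-Probability.Probability"
begin

text \<open>Potential v_omega(n) = f(phi^n omega) (only n >= 1 is needed below).\<close>
definition pot :: "('a \<Rightarrow> 'a) \<Rightarrow> ('a \<Rightarrow> real) \<Rightarrow> 'a \<Rightarrow> nat \<Rightarrow> real" where
  "pot phi f \<omega> n = f ((phi ^^ n) \<omega>)"

definition step_mat :: "('a \<Rightarrow> 'a) \<Rightarrow> ('a \<Rightarrow> real) \<Rightarrow> nat \<Rightarrow> 'a \<Rightarrow> real \<Rightarrow> real^2^2" where
  "step_mat phi f n \<omega> E = (\<chi> i j.
      if i = 1 then (if j = 1 then pot phi f \<omega> n - E else -1)
      else (if j = 1 then 1 else 0))"

fun transfer :: "('a \<Rightarrow> 'a) \<Rightarrow> ('a \<Rightarrow> real) \<Rightarrow> nat \<Rightarrow> 'a \<Rightarrow> real \<Rightarrow> real^2^2" where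
  "transfer phi f 0 \<omega> E = mat 1"
| "transfer phi f (Suc N) \<omega> E = step_mat phi f (Suc N) \<omega> E ** transfer phi f N \<omega> E"

definition opnorm :: "real^2^2 \<Rightarrow> real" where
  "opnorm A = onorm (\<lambda>x. A *v x)"

definition lyap :: "'a measure \<Rightarrow> ('a \<Rightarrow> 'a) \<Rightarrow> ('a \<Rightarrow> real) \<Rightarrow> real \<Rightarrow> real" where
  "lyap M phi f E = lim (\<lambda>N. (1 / real N) * (\<integral>\<omega>. ln (opnorm (transfer phi f N \<omega> E)) \<partial>M))"

definition Iint :: "('a \<Rightarrow> 'a) \<Rightarrow> ('a \<Rightarrow> real) \<Rightarrow> nat \<Rightarrow> 'a \<Rightarrow> real" where
  "Iint phi f N \<omega> = (\<integral>E. 1 / (opnorm (transfer phi f N \<omega> E))\<^sup>2 \<partial>lborel)"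

end

theory Submission
  imports Defs
begin



lemma opnorm_mult: "opnorm (A ** B) \<le> opnorm A * opnorm B"
proof -
  have "(\<lambda>x. (A ** B) *v x) = (\<lambda>x. A *v x) \<circ> (\<lambda>x. B *v x)"
    by (rule ext) (simp add: matrix_vector_mul_assoc)
  then show ?thesis unfolding opnorm_def
    by (simp add: onorm_compose matrix_vector_mul_bounded_linear)
qed

lemma opnorm_add: "opnorm (A + B) \<le> opnorm A + opnorm B"
proof -
  have "(\<lambda>x. (A + B) *v x) = (\<lambda>x. A *v x + B *v x)"
    by (rule ext) (simp add: matrix_vector_mult_add_rdistrib)
  then show ?thesis unfolding opnorm_def
    by (simp add: onorm_triangle matrix_vector_mul_bounded_linear)
qed

lemma opnorm_nonneg: "0 \<le> opnorm A"
  unfolding opnorm_def by (simp add: onorm_pos_le matrix_vector_mul_bounded_linear)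

lemma opnorm_comp: "\<bar>A $ i $ j\<bar> \<le> opnorm A"
  unfolding opnorm_def by (rule matrix_component_le_onorm)

lemma opnorm_le_sum: "opnorm A \<le> \<bar>A$1$1\<bar> + \<bar>A$1$2\<bar> + \<bar>A$2$1\<bar> + \<bar>A$2$2\<bar>"
  using onorm_le_matrix_component_sum[of A] unfolding opnorm_def by (simp add: sum_2)

lemma opnorm_col: "(A$1$j)^2 + (A$2$j)^2 \<le> (opnorm A)^2"
proof -
  have "norm (column j A) \<le> opnorm A" unfolding opnorm_def by (rule norm_column_le_onorm)
  moreover have "norm (column j A) = sqrt ((A$1$j)^2 + (A$2$j)^2)"
    by (simp add: norm_vec_def L2_set_def sum_2 column_def)
  ultimately have "sqrt ((A$1$j)^2 + (A$2$j)^2) \<le> opnorm A" by simp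
  then show ?thesis
    by (metis abs_of_nonneg opnorm_nonneg real_sqrt_le_iff sqrt_le_D)
qed

lemma aux4: fixes a b c d :: real assumes "a*d - b*c = 1" shows "2 \<le> a^2+c^2+b^2+d^2"
proof -
  have "0 \<le> (a-d)^2 + (b+c)^2" by simp
  also have "\<dots> = a^2+c^2+b^2+d^2 - 2*(a*d-b*c)" by (simp add: power2_eq_square algebra_simps)
  finally show ?thesis using assms by simp
qed

lemma opnorm_det1: assumes "det A = 1" shows "1 \<le> opnorm A"
proof -
  have d: "A$1$1 * A$2$2 - A$1$2 * A$2$1 = 1" using assms by (simp add: det_2)
  have c1: "(A$1$1)^2 + (A$2$1)^2 \<le> (opnorm A)^2" by (rule opnorm_col)
  have c2: "(A$1$2)^2 + (A$2$2)^2 \<le> (opnorm A)^2" by (rule opnorm_col)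
  have "2 \<le> (A$1$1)^2 + (A$2$1)^2 + (A$1$2)^2 + (A$2$2)^2"
    using aux4[OF d] by simp

  then have "1 \<le> (opnorm A)^2" using c1 c2 by simp
  then show ?thesis using opnorm_nonneg[of A]
    using power2_le_imp_le[of 1 "opnorm A"] by simp
qed




lemma det_step: "det (step_mat phi f n \<omega> E) = 1"
  by (simp add: det_2 step_mat_def)

lemma det_transfer: "det (transfer phi f n \<omega> E) = 1"
  by (induction n) (simp_all add: det_mul det_step)

lemma opnorm_transfer_ge1: "1 \<le> opnorm (transfer phi f n \<omega> E)"
  by (rule opnorm_det1[OF det_transfer])

lemma pot_shift: "pot phi f ((phi ^^ n) \<omega>) m = pot phi f \<omega> (m + n)"
  by (simp add: pot_def funpow_add)

lemma step_shift: "step_mat phi f m ((phi ^^ n) \<omega>) E = step_mat phi f (m + n) \<omega> E"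
  unfolding step_mat_def pot_shift ..

lemma transfer_cocycle:
  "transfer phi f (n + m) \<omega> E = transfer phi f m ((phi ^^ n) \<omega>) E ** transfer phi f n \<omega> E"
proof (induction m)
  case 0 then show ?case by (simp add: matrix_mul_lid)
next
  case (Suc m)
  have "transfer phi f (n + Suc m) \<omega> E = step_mat phi f (Suc (n + m)) \<omega> E ** transfer phi f (n + m) \<omega> E"
    by simp
  also have "\<dots> = step_mat phi f (Suc m) ((phi ^^ n) \<omega>) E ** (transfer phi f m ((phi ^^ n) \<omega>) E ** transfer phi f n \<omega> E)"
  proof -
    have "step_mat phi f (Suc m) ((phi ^^ n) \<omega>) E = step_mat phi f (Suc (n + m)) \<omega> E"
      by (simp add: step_shift add.commute)
    then show ?thesis by (simp add: Suc.IH)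
  qed
  also have "\<dots> = transfer phi f (Suc m) ((phi ^^ n) \<omega>) E ** transfer phi f n \<omega> E"
    by (simp add: matrix_mul_assoc)
  finally show ?case .
qed

lemma opnorm_step_le: "opnorm (step_mat phi f n \<omega> E) \<le> \<bar>pot phi f \<omega> n - E\<bar> + 2"
  using opnorm_le_sum[of "step_mat phi f n \<omega> E"] by (simp add: step_mat_def)

lemma opnorm_transfer_le:
  assumes "\<And>i. \<bar>pot phi f \<omega> i - E\<bar> + 2 \<le> K"
  shows "opnorm (transfer phi f n \<omega> E) \<le> K ^ n"
proof (induction n)
  case 0
  have "opnorm (mat 1 :: real^2^2) \<le> 1"
    unfolding opnorm_def matrix_vector_mul_lid by (simp add: onorm_id)
  then show ?case by simp
next
  case (Suc n)
  have K: "0 \<le> K" using assms[of 0] by simp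
  have "opnorm (transfer phi f (Suc n) \<omega> E) \<le> opnorm (step_mat phi f (Suc n) \<omega> E) * opnorm (transfer phi f n \<omega> E)"
    by (simp add: opnorm_mult)
  also have "\<dots> \<le> K * K ^ n"
    by (intro mult_mono Suc opnorm_nonneg order.trans[OF opnorm_step_le assms]) (simp add: K)
  finally show ?case by simp
qed

lemma opnorm_transfer_pos: "0 < opnorm (transfer phi f n \<omega> E)"
  using opnorm_transfer_ge1[of phi f n \<omega> E] by simp

definition ell where "ell phi f n \<omega> E = ln (opnorm (transfer phi f n \<omega> E))"

lemma ell_nonneg: "0 \<le> ell phi f n \<omega> E"
  unfolding ell_def using opnorm_transfer_ge1[of phi f n \<omega> E] by simp

lemma ell_sub: "ell phi f (n + m) \<omega> E \<le> ell phi f n \<omega> E + ell phi f m ((phi ^^ n) \<omega>) E"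
proof -
  have "opnorm (transfer phi f (n + m) \<omega> E) \<le> opnorm (transfer phi f m ((phi ^^ n) \<omega>) E) * opnorm (transfer phi f n \<omega> E)"
    by (simp add: transfer_cocycle opnorm_mult)
  then have "ln (opnorm (transfer phi f (n + m) \<omega> E)) \<le> ln (opnorm (transfer phi f m ((phi ^^ n) \<omega>) E) * opnorm (transfer phi f n \<omega> E))"
    using opnorm_transfer_pos by (subst ln_le_cancel_iff) (auto intro!: mult_pos_pos)
  also have "\<dots> = ell phi f m ((phi ^^ n) \<omega>) E + ell phi f n \<omega> E"
    unfolding ell_def using opnorm_transfer_pos[of phi f m "(phi^^n) \<omega>" E] opnorm_transfer_pos[of phi f n \<omega> E]
    by (simp add: ln_mult)
  finally show ?thesis unfolding ell_def by simp
qed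

lemma ell_le:
  assumes "\<And>i. \<bar>pot phi f \<omega> i - E\<bar> + 2 \<le> K"
  shows "ell phi f n \<omega> E \<le> n * ln K"
proof -
  have K: "1 \<le> K" using assms[of 0] by simp
  have "ell phi f n \<omega> E \<le> ln (K ^ n)"
    unfolding ell_def using opnorm_transfer_le[OF assms] opnorm_transfer_pos K
    by (subst ln_le_cancel_iff) auto
  then show ?thesis using K by (simp add: ln_realpow)
qed




lemma block_ineq:
  fixes l :: "nat \<Rightarrow> nat \<Rightarrow> real"
  assumes sub: "\<And>n m a. l (n + m) a \<le> l n a + l m (a + n)"
    and nn: "\<And>n a. 0 \<le> l n a"
    and bd: "\<And>n a. l n a \<le> n * c"
    and k: "0 < k"
  shows "k * l N 0 \<le> (\<Sum>i<N. l k i) + 2 * k^2 * c"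
proof -
  have c: "0 \<le> c" using nn[of 1 0] bd[of 1 0] by simp
  have L1: "l (m*k) a \<le> (\<Sum>j<m. l k (a + j*k))" for m a
  proof (induction m)
    case 0 then show ?case using bd[of 0 a] by simp
  next
    case (Suc m)
    have "l (Suc m * k) a = l (m*k + k) a" by (simp add: add.commute)
    also have "\<dots> \<le> l (m*k) a + l k (a + m*k)" by (rule sub)
    also have "\<dots> \<le> (\<Sum>j<Suc m. l k (a + j*k))" using Suc by simp
    finally show ?case .
  qed
  have L2: "l N 0 \<le> (\<Sum>j<(N-r) div k. l k (r + j*k)) + 2*k*c" if r: "r < k" for r
  proof (cases "N < r")
    case True
    then have "l N 0 \<le> k * c" using bd[of N 0] c
      by (meson less_imp_le_nat mult_right_mono of_nat_le_iff order_trans r)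
    moreover have "0 \<le> real k * c" using c by simp
    ultimately show ?thesis using True by simp
  next
    case False
    define m where "m = (N - r) div k"
    define s where "s = (N - r) mod k"
    have N: "N = r + (m*k + s)" using False unfolding m_def s_def by simp
    have s: "s < k" unfolding s_def using k by simp
    have "l N 0 \<le> l r 0 + l (m*k + s) r" using sub[of r "m*k+s" 0] N by simp
    also have "\<dots> \<le> l r 0 + (l (m*k) r + l s (r + m*k))" using sub[of "m*k" s r] by simp
    also have "\<dots> \<le> r*c + ((\<Sum>j<m. l k (r + j*k)) + s*c)"
      using bd[of r 0] bd[of s "r+m*k"] L1[of m r] by linarith
    also have "\<dots> \<le> (\<Sum>j<m. l k (r + j*k)) + 2*k*c"
    proof -
      have "r*c \<le> k*c" "s*c \<le> k*c" using r s c by (auto intro: mult_right_mono)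
      then show ?thesis by simp
    qed
    finally show ?thesis unfolding m_def .
  qed
  define S where "S = Sigma {..<k} (\<lambda>r. {..<(N-r) div k})"
  define h where "h = (\<lambda>p::nat\<times>nat. fst p + snd p * k)"
  have inj: "inj_on h S"
  proof (rule inj_onI)
    fix p q assume "p \<in> S" "q \<in> S" "h p = h q"
    then have "fst p < k" "fst q < k" "fst p + snd p * k = fst q + snd q * k" by (auto simp: S_def h_def)
    then have a: "fst p < k" "fst q < k" and e: "fst p + snd p * k = fst q + snd q * k" by auto
    have 1: "(fst p + snd p * k) mod k = fst p" using a(1) by simp
    have 2: "(fst q + snd q * k) mod k = fst q" using a(2) by simp
    have 3: "(fst p + snd p * k) div k = snd p" using a(1) by simp
    have 4: "(fst q + snd q * k) div k = snd q" using a(2) by simp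
    show "p = q" using 1 2 3 4 e by (metis prod.collapse)
  qed
  have img: "h ` S \<subseteq> {..<N}"
  proof
    fix i assume "i \<in> h ` S"
    then obtain r j where rj: "r < k" "j < (N-r) div k" "i = r + j*k" by (auto simp: S_def h_def)
    then have "(j+1) * k \<le> (N-r) div k * k" by (intro mult_right_mono) auto
    also have "\<dots> \<le> N - r" by (rule div_times_less_eq_dividend)
    finally have "(j+1)*k \<le> N - r" .
    then show "i \<in> {..<N}" using rj k by simp
  qed
  have "k * l N 0 = (\<Sum>r<k. l N 0)" by simp
  also have "\<dots> \<le> (\<Sum>r<k. (\<Sum>j<(N-r) div k. l k (r + j*k)) + 2*k*c)"
    by (rule sum_mono) (rule L2, simp)
  also have "\<dots> = (\<Sum>p\<in>S. l k (h p)) + 2*k^2*c"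
    by (simp add: sum.distrib S_def h_def sum.Sigma power2_eq_square split_def)
  also have "(\<Sum>p\<in>S. l k (h p)) = (\<Sum>i\<in>h ` S. l k i)"
    by (rule sum.reindex[OF inj, symmetric, unfolded comp_def])
  also have "\<dots> \<le> (\<Sum>i<N. l k i)"
    by (rule sum_mono2[OF _ img]) (auto intro: nn)
  finally show ?thesis by simp
qed




lemma fekete:
  fixes u :: "nat \<Rightarrow> real"
  assumes sub: "\<And>n m. u (n + m) \<le> u n + u m" and nn: "\<And>n. 0 \<le> u n" and u0: "u 0 = 0"
  shows "(\<lambda>n. u n / n) \<longlonglongrightarrow> (INF n\<in>{1..}. u n / n)"
proof -
  define L where "L = (INF n\<in>{1..}. u n / n)"
  have bdd: "bdd_below ((\<lambda>n. u n / n) ` {1..})" by (rule bdd_belowI[of _ 0]) (auto intro: nn divide_nonneg_nonneg)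
  have low: "L \<le> u n / n" if "1 \<le> n" for n unfolding L_def using bdd that by (intro cINF_lower) auto
  have mul: "u (q * k) \<le> q * u k" for q k
  proof (induction q)
    case 0 then show ?case using u0 by simp
  next
    case (Suc q)
    have "u (Suc q * k) = u (q * k + k)" by (simp add: add.commute)
    also have "\<dots> \<le> u (q*k) + u k" by (rule sub)
    finally show ?case using Suc by (simp add: algebra_simps)
  qed
  show ?thesis unfolding L_def[symmetric]
  proof (rule LIMSEQ_I)
    fix r :: real assume r: "0 < r"
    have "L < L + r/2" using r by simp
    then obtain k where k: "k \<in> {1..}" "u k / k < L + r/2"
      unfolding L_def using bdd by (subst (asm) cINF_less_iff) auto
    then have k1: "1 \<le> k" by simp
    define Sk where "Sk = (\<Sum>j<k. u j)"
    have Sk: "0 \<le> Sk" unfolding Sk_def by (intro sum_nonneg nn)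
    have ur: "u j \<le> Sk" if "j < k" for j
      unfolding Sk_def using that by (intro member_le_sum nn) auto
    obtain N0 :: nat where N0: "2 * Sk / r < N0" using reals_Archimedean2 by blast
    show "\<exists>no. \<forall>n\<ge>no. norm (u n / real n - L) < r"
    proof (intro exI[of _ "Suc N0"] allI impI)
      fix n assume n: "Suc N0 \<le> n"
      then have n1: "1 \<le> n" and npos: "0 < real n" by auto
      define q where "q = n div k"
      have nq: "n = q * k + n mod k" unfolding q_def by simp
      have "u n \<le> u (q*k) + u (n mod k)" using sub[of "q*k" "n mod k"] nq by simp
      also have "\<dots> \<le> q * u k + Sk" using mul[of q k] ur[of "n mod k"] k1 by (intro add_mono) auto
      finally have un: "u n \<le> q * u k + Sk" .
      have "real (q * k) \<le> n" using nq by linarith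
      then have "q * u k = real (q*k) * (u k / k)" using k1 by (simp add: field_simps)
      also have "\<dots> \<le> n * (u k / k)" using \<open>real (q * k) \<le> n\<close> nn[of k] by (intro mult_right_mono) auto
      finally have "u n \<le> n * (u k / k) + Sk" using un by simp
      then have "u n / n \<le> u k / k + Sk / n" using npos by (simp add: field_simps)
      moreover have "Sk / n < r / 2"
      proof -
        have "2 * Sk / r < n" using N0 n by linarith
        then have "2 * Sk < n * r" using r by (simp add: field_simps)
        then show ?thesis using npos by (simp add: field_simps)
      qed
      ultimately have "u n / n < L + r" using k(2) by linarith
      moreover have "L \<le> u n / n" using low n1 by simp
      ultimately show "norm (u n / real n - L) < r" by simp
    qed
  qed
qed




lemma vec22_meas:
  fixes F :: "'b \<Rightarrow> real^2^2"
  assumes "\<And>i j. (\<lambda>x. F x $ i $ j) \<in> borel_measurable N"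
  shows "F \<in> borel_measurable N"
proof -
  have eq: "F = (\<lambda>x. \<Sum>i\<in>UNIV. \<Sum>j\<in>UNIV. (F x $ i $ j) *\<^sub>R axis i (axis j (1::real)))"
    by (rule ext) (simp add: vec_eq_iff sum_2 axis_def forall_2)
  show ?thesis by (subst eq) (intro borel_measurable_sum borel_measurable_scaleR assms borel_measurable_const)
qed

lemma comp_meas:
  fixes F :: "'b \<Rightarrow> real^2^2"
  assumes "F \<in> borel_measurable N"
  shows "(\<lambda>x. F x $ i $ j) \<in> borel_measurable N"
  by (rule borel_measurable_continuous_on[OF _ assms]) (intro continuous_intros)

lemma transfer_meas:
  assumes p: "\<And>n. (\<lambda>x. pot phi f (w x) n) \<in> borel_measurable N"
    and e: "e \<in> borel_measurable N"
  shows "(\<lambda>x. transfer phi f n (w x) (e x)) \<in> borel_measurable N"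
proof (induction n)
  case 0 then show ?case by simp
next
  case (Suc n)
  have st: "(\<lambda>x. step_mat phi f (Suc n) (w x) (e x) $ i $ j) \<in> borel_measurable N" for i j
    unfolding step_mat_def using p e by simp
  show ?case
  proof (rule vec22_meas)
    fix i j
    show "(\<lambda>x. transfer phi f (Suc n) (w x) (e x) $ i $ j) \<in> borel_measurable N"
      by (simp add: matrix_matrix_mult_def sum_2)
         (intro borel_measurable_add borel_measurable_times st comp_meas[OF Suc])
  qed
qed

lemma opnorm_lip: "\<bar>opnorm A - opnorm B\<bar> \<le> 4 * norm (A - B)"
proof -
  have c: "\<bar>C $ i $ j\<bar> \<le> norm C" for C :: "real^2^2" and i j
    using component_le_norm_cart[where x="C $ i" and i=j] Finite_Cartesian_Product.norm_nth_le[where x=C and i=i] by linarith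
  have d: "opnorm C \<le> 4 * norm C" for C :: "real^2^2"
    using opnorm_le_sum[of C] c[of C 1 1] c[of C 1 2] c[of C 2 1] c[of C 2 2] by linarith
  have "opnorm A \<le> opnorm (A - B) + opnorm B" using opnorm_add[of "A - B" B] by simp
  moreover have "opnorm B \<le> opnorm (B - A) + opnorm A" using opnorm_add[of "B - A" A] by simp
  moreover have "norm (B - A) = norm (A - B)" by (rule norm_minus_commute)
  ultimately show ?thesis using d[of "A - B"] d[of "B - A"] by linarith
qed

lemma opnorm_cont: "continuous_on UNIV opnorm"
proof (rule lipschitz_on_continuous_on)
  show "4-lipschitz_on UNIV opnorm"
    by (rule lipschitz_onI) (auto simp: dist_norm opnorm_lip)
qed

lemma opnorm_transfer_meas:
  assumes "\<And>n. (\<lambda>x. pot phi f (w x) n) \<in> borel_measurable N" and "e \<in> borel_measurable N"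
  shows "(\<lambda>x. opnorm (transfer phi f n (w x) (e x))) \<in> borel_measurable N"
  by (rule borel_measurable_continuous_on[OF opnorm_cont transfer_meas[OF assms]])

lemma opnorm_step_diff: "opnorm (step_mat phi f n \<omega> E - step_mat phi f n \<omega> E') \<le> \<bar>E - E'\<bar>"
  using opnorm_le_sum[of "step_mat phi f n \<omega> E - step_mat phi f n \<omega> E'"]
  by (simp add: step_mat_def abs_minus_commute)

lemma mat_diff_aux: fixes A B A' B' :: "real^2^2"
  shows "A ** B - A' ** B' = A ** (B - B') + (A - A') ** B'"
  by (simp add: vec_eq_iff matrix_matrix_mult_def sum_2 algebra_simps)

lemma transfer_diff:
  assumes "\<And>i. \<bar>pot phi f \<omega> i - E\<bar> + 2 \<le> K" "\<And>i. \<bar>pot phi f \<omega> i - E'\<bar> + 2 \<le> K"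
  shows "opnorm (transfer phi f n \<omega> E - transfer phi f n \<omega> E') \<le> n * K^n * \<bar>E - E'\<bar>"
proof (induction n)
  case 0 then show ?case by (simp add: opnorm_def onorm_zero)
next
  case (Suc n)
  have K: "1 \<le> K" using assms(1)[of 0] by simp
  define A where "A = step_mat phi f (Suc n) \<omega> E"
  define A' where "A' = step_mat phi f (Suc n) \<omega> E'"
  define B where "B = transfer phi f n \<omega> E"
  define B' where "B' = transfer phi f n \<omega> E'"
  have eq: "transfer phi f (Suc n) \<omega> E - transfer phi f (Suc n) \<omega> E' = A ** (B - B') + (A - A') ** B'"
    unfolding A_def A'_def B_def B'_def by (simp add: mat_diff_aux)
  have nA: "opnorm A \<le> K" unfolding A_def by (rule order.trans[OF opnorm_step_le assms(1)])
  have nB': "opnorm B' \<le> K ^ n" unfolding B'_def by (rule opnorm_transfer_le[OF assms(2)])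
  have nd: "opnorm (A - A') \<le> \<bar>E - E'\<bar>" unfolding A_def A'_def by (rule opnorm_step_diff)
  have "opnorm (A ** (B - B') + (A - A') ** B') \<le> opnorm A * opnorm (B - B') + opnorm (A - A') * opnorm B'"
    by (rule order.trans[OF opnorm_add add_mono[OF opnorm_mult opnorm_mult]])
  also have "\<dots> \<le> K * (n * K^n * \<bar>E - E'\<bar>) + \<bar>E - E'\<bar> * K^n"
    using Suc[unfolded B_def[symmetric] B'_def[symmetric]] nA nB' nd K
    by (intro add_mono mult_mono) (auto simp: opnorm_nonneg)
  also have "\<dots> \<le> Suc n * K ^ Suc n * \<bar>E - E'\<bar>"
  proof -
    have "K^n \<le> K^Suc n" using K by simp
    then have "\<bar>E - E'\<bar> * K^n \<le> \<bar>E - E'\<bar> * K^Suc n" by (simp add: mult_left_mono)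
    then show ?thesis by (simp add: algebra_simps)
  qed
  finally show ?case using eq by simp
qed

lemma ell_lip:
  assumes "\<And>i. \<bar>pot phi f \<omega> i - E\<bar> + 2 \<le> K" "\<And>i. \<bar>pot phi f \<omega> i - E'\<bar> + 2 \<le> K"
  shows "ell phi f n \<omega> E \<le> ell phi f n \<omega> E' + n * K^n * \<bar>E - E'\<bar>"
proof -
  define x where "x = opnorm (transfer phi f n \<omega> E)"
  define y where "y = opnorm (transfer phi f n \<omega> E')"
  define d where "d = n * K^n * \<bar>E - E'\<bar>"
  have y: "1 \<le> y" unfolding y_def by (rule opnorm_transfer_ge1)
  have x: "1 \<le> x" unfolding x_def by (rule opnorm_transfer_ge1)
  have "x \<le> y + d"
    using opnorm_add[of "transfer phi f n \<omega> E - transfer phi f n \<omega> E'" "transfer phi f n \<omega> E'"]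
      transfer_diff[OF assms, of n] unfolding x_def y_def d_def by simp
  moreover have "0 \<le> d" using assms(1)[of 0] unfolding d_def by simp
  ultimately have "ln x \<le> ln (y + d)" using x y by (subst ln_le_cancel_iff) auto
  also have "ln (y + d) \<le> ln y + d"
  proof -
    have "y + d = y * (1 + d / y)" using y by (simp add: field_simps)
    then have "ln (y + d) = ln (y * (1 + d / y))" by simp
    also have "\<dots> = ln y + ln (1 + d / y)" using y \<open>0 \<le> d\<close>
      by (intro ln_mult_pos) (auto intro: add_pos_nonneg)
    finally have "ln (y + d) = ln y + ln (1 + d / y)" .
    also have "ln (1 + d / y) \<le> d / y" using \<open>0 \<le> d\<close> y by (intro ln_add_one_self_le_self) auto
    also have "d / y \<le> d" using \<open>0 \<le> d\<close> y
      by (simp add: divide_le_eq mult_le_cancel_left1 mult_left_mono[of 1 y d])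
    finally show ?thesis by simp
  qed
  finally show ?thesis unfolding ell_def x_def y_def d_def by simp
qed

lemma transfer_growth:
  assumes C: "\<And>i. \<bar>pot phi f \<omega> i\<bar> \<le> C" and E: "C + 2 \<le> \<bar>E\<bar>"
  shows "(\<bar>E\<bar> - C - 1) ^ n \<le> \<bar>transfer phi f n \<omega> E $ 1 $ 1\<bar> \<and>
         \<bar>transfer phi f n \<omega> E $ 2 $ 1\<bar> \<le> \<bar>transfer phi f n \<omega> E $ 1 $ 1\<bar>"
proof (induction n)
  case 0 then show ?case by (simp add: mat_def)
next
  case (Suc n)
  define a where "a = transfer phi f n \<omega> E $ 1 $ 1"
  define b where "b = transfer phi f n \<omega> E $ 2 $ 1"
  define v where "v = pot phi f \<omega> (Suc n)"
  have e1: "transfer phi f (Suc n) \<omega> E $ 1 $ 1 = (v - E) * a - b"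
    by (simp add: matrix_matrix_mult_def sum_2 step_mat_def a_def b_def v_def)
  have e2: "transfer phi f (Suc n) \<omega> E $ 2 $ 1 = a"
    by (simp add: matrix_matrix_mult_def sum_2 step_mat_def a_def b_def v_def)
  have IH: "(\<bar>E\<bar> - C - 1) ^ n \<le> \<bar>a\<bar>" "\<bar>b\<bar> \<le> \<bar>a\<bar>" using Suc unfolding a_def b_def by auto
  have vE: "\<bar>E\<bar> - C \<le> \<bar>v - E\<bar>" using C[of "Suc n"] unfolding v_def by linarith
  have q: "1 \<le> \<bar>E\<bar> - C - 1" using E by simp
  have "(\<bar>E\<bar> - C) * \<bar>a\<bar> \<le> \<bar>v - E\<bar> * \<bar>a\<bar>" using vE by (simp add: mult_right_mono)
  moreover have "\<bar>(v - E) * a\<bar> \<le> \<bar>(v - E) * a - b\<bar> + \<bar>b\<bar>"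
    using abs_triangle_ineq[of "(v - E) * a - b" b] by simp
  moreover have "\<bar>(v - E) * a\<bar> = \<bar>v - E\<bar> * \<bar>a\<bar>" by (rule abs_mult)
  moreover have "(\<bar>E\<bar> - C - 1) * \<bar>a\<bar> = (\<bar>E\<bar> - C) * \<bar>a\<bar> - \<bar>a\<bar>" by algebra
  ultimately have "(\<bar>E\<bar> - C - 1) * \<bar>a\<bar> \<le> \<bar>(v - E) * a - b\<bar>"
    using IH(2) by linarith
  moreover have "(\<bar>E\<bar> - C - 1) ^ Suc n \<le> (\<bar>E\<bar> - C - 1) * \<bar>a\<bar>"
    using IH(1) q by (simp add: mult_left_mono)
  moreover have "\<bar>a\<bar> \<le> (\<bar>E\<bar> - C - 1) * \<bar>a\<bar>"
    using mult_right_mono[OF q, of "\<bar>a\<bar>"] by simp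
  ultimately show ?case unfolding e1 e2 by linarith
qed

lemma opnorm_growth:
  assumes C: "\<And>i. \<bar>pot phi f \<omega> i\<bar> \<le> C" and E: "C + 2 \<le> \<bar>E\<bar>"
  shows "(\<bar>E\<bar> - C - 1) ^ n \<le> opnorm (transfer phi f n \<omega> E)"
  using transfer_growth[OF assms, of n] opnorm_comp[of "transfer phi f n \<omega> E" 1 1] by linarith




locale mpt = prob_space M for M :: "'a measure" +
  fixes T :: "'a \<Rightarrow> 'a"
  assumes T_meas[measurable]: "T \<in> M \<rightarrow>\<^sub>M M"
    and T_pres: "distr M M T = M"
    and erg: "\<forall>A\<in>sets M. T -` A \<inter> space M = A \<longrightarrow> measure M A = 0 \<or> measure M A = 1"
begin

lemma Tn_meas[measurable]: "(T ^^ n) \<in> M \<rightarrow>\<^sub>M M"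
proof (induction n)
  case 0 then show ?case by simp
next
  case (Suc n) then show ?case by (simp add: measurable_comp)
qed

lemma Tn_space: "x \<in> space M \<Longrightarrow> (T ^^ n) x \<in> space M"
  by (rule measurable_space[OF Tn_meas])

lemma T_space: "x \<in> space M \<Longrightarrow> T x \<in> space M"
  by (rule measurable_space[OF T_meas])

lemma integral_T:
  fixes g :: "'a \<Rightarrow> real"
  assumes [measurable]: "g \<in> borel_measurable M"
  shows "(\<integral>x. g (T x) \<partial>M) = (\<integral>x. g x \<partial>M)"
  using integral_distr[where g=T and f=g and M=M and N=M] assms T_pres by simp

lemma integral_Tn:
  fixes g :: "'a \<Rightarrow> real"
  assumes [measurable]: "g \<in> borel_measurable M"
  shows "(\<integral>x. g ((T ^^ n) x) \<partial>M) = (\<integral>x. g x \<partial>M)"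
proof (induction n)
  case 0 then show ?case by simp
next
  case (Suc n)
  have "(\<integral>x. g ((T ^^ Suc n) x) \<partial>M) = (\<integral>x. (\<lambda>y. g ((T ^^ n) y)) (T x) \<partial>M)"
    by (simp add: funpow_Suc_right del: funpow.simps)
  also have "\<dots> = (\<integral>x. g ((T ^^ n) x) \<partial>M)" by (rule integral_T) measurable
  finally show ?case using Suc by simp
qed

definition S :: "('a \<Rightarrow> real) \<Rightarrow> nat \<Rightarrow> 'a \<Rightarrow> real" where
  "S g n x = (\<Sum>i<n. g ((T ^^ i) x))"

lemma S_meas[measurable]: "g \<in> borel_measurable M \<Longrightarrow> S g n \<in> borel_measurable M"
  unfolding S_def by (rule borel_measurable_sum, rule measurable_compose[OF Tn_meas], assumption)

lemma S_Suc: "S g (Suc n) x = g x + S g n (T x)"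
  unfolding S_def sum.lessThan_Suc_shift by (simp add: funpow_Suc_right del: funpow.simps)

fun Mx :: "('a \<Rightarrow> real) \<Rightarrow> nat \<Rightarrow> 'a \<Rightarrow> real" where
  "Mx g 0 x = 0"
| "Mx g (Suc n) x = max (Mx g n x) (S g (Suc n) x)"

lemma Mx_meas[measurable]: "g \<in> borel_measurable M \<Longrightarrow> Mx g n \<in> borel_measurable M"
proof (induction n)
  case 0
  have "Mx g 0 = (\<lambda>x. 0)" by (rule ext) simp
  then show ?case by simp
next
  case (Suc n)
  have "Mx g (Suc n) = (\<lambda>x. max (Mx g n x) (S g (Suc n) x))" by (rule ext) simp
  then show ?case using Suc by (simp add: borel_measurable_max S_meas)
qed

lemma Mx_nonneg: "0 \<le> Mx g n x"
  by (induction n) auto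

lemma Mx_ge: "k \<le> n \<Longrightarrow> S g k x \<le> Mx g n x"
proof (induction n)
  case 0 then show ?case by (simp add: S_def)
next
  case (Suc n) then show ?case by (cases "k = Suc n") auto
qed

lemma Mx_attained: "\<exists>k\<le>n. Mx g n x = S g k x"
proof (induction n)
  case 0 then show ?case by (simp add: S_def)
next
  case (Suc n)
  then obtain k where "k \<le> n" "Mx g n x = S g k x" by auto
  then show ?case by (cases "Mx g n x \<le> S g (Suc n) x") (auto intro: exI[of _ "Suc n"] exI[of _ k])
qed

lemma Mx_bound: "(\<And>y. \<bar>g y\<bar> \<le> K) \<Longrightarrow> \<bar>Mx g n x\<bar> \<le> n * K"
proof -
  assume b: "\<And>y. \<bar>g y\<bar> \<le> K"
  have K: "0 \<le> K" using b[of x] by simp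
  have Sb: "\<bar>S g k x\<bar> \<le> k * K" for k
  proof -
    have "\<bar>S g k x\<bar> \<le> (\<Sum>i<k. \<bar>g ((T ^^ i) x)\<bar>)" unfolding S_def by (rule sum_abs)
    also have "\<dots> \<le> (\<Sum>i<k. K)" by (intro sum_mono b)
    finally show ?thesis by simp
  qed
  obtain k where "k \<le> n" "Mx g n x = S g k x" using Mx_attained by blast
  then show ?thesis using Sb[of k] K
    by (metis (no_types, opaque_lifting) mult_right_mono of_nat_le_iff order_trans)
qed

lemma maximal_ergodic:
  assumes [measurable]: "g \<in> borel_measurable M" and b: "\<And>y. \<bar>g y\<bar> \<le> K"
  shows "0 \<le> (\<integral>x. (if 0 < Mx g n x then g x else 0) \<partial>M)"
proof -
  have K: "0 \<le> K" using b[of undefined] by simp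
  have int_b: "integrable M u" if [measurable]: "u \<in> borel_measurable M" and "\<And>x. \<bar>u x\<bar> \<le> B" for u :: "'a \<Rightarrow> real" and B :: real
    using that by (intro integrable_const_bound[of u B]) auto
  have iM: "integrable M (Mx g n)" by (rule int_b[of _ "n*K"]) (auto intro: Mx_bound b)
  have iMT: "integrable M (\<lambda>x. Mx g n (T x))" by (rule int_b[of _ "n*K"]) (auto intro: Mx_bound b)
  have iG: "integrable M (\<lambda>x. if 0 < Mx g n x then g x else 0)"
    by (rule int_b[of _ K]) (auto intro: b K)
  have pw: "Mx g n x - Mx g n (T x) \<le> (if 0 < Mx g n x then g x else 0)" for x
  proof (cases "0 < Mx g n x")
    case True
    obtain k where k: "k \<le> n" "Mx g n x = S g k x" using Mx_attained by blast
    have "k \<noteq> 0"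
    proof
      assume "k = 0" then show False using k True by (simp add: S_def)
    qed
    then obtain j where j: "k = Suc j" by (cases k) auto
    have "Mx g n x = g x + S g j (T x)" using k j by (simp add: S_Suc)
    also have "S g j (T x) \<le> Mx g n (T x)" using Mx_ge[of j n] k j by simp
    finally show ?thesis using True by simp
  next
    case False
    then show ?thesis using Mx_nonneg[of g n x] Mx_nonneg[of g n "T x"] by simp
  qed
  have "(\<integral>x. Mx g n x - Mx g n (T x) \<partial>M) = (\<integral>x. Mx g n x \<partial>M) - (\<integral>x. Mx g n (T x) \<partial>M)"
    using iM iMT by simp
  also have "(\<integral>x. Mx g n (T x) \<partial>M) = (\<integral>x. Mx g n x \<partial>M)" by (rule integral_T) measurable
  finally have "(\<integral>x. Mx g n x - Mx g n (T x) \<partial>M) = 0" by simp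
  moreover have "(\<integral>x. Mx g n x - Mx g n (T x) \<partial>M) \<le> (\<integral>x. (if 0 < Mx g n x then g x else 0) \<partial>M)"
    using iM iMT iG pw by (intro integral_mono) auto
  ultimately show ?thesis by simp
qed

lemma birkhoff_upper:
  fixes h :: "'a \<Rightarrow> real"
  assumes [measurable]: "h \<in> borel_measurable M" and hb: "\<And>y. \<bar>h y\<bar> \<le> K" and e: "0 < \<epsilon>"
  shows "AE x in M. \<exists>B. \<forall>n. S h n x \<le> n * ((\<integral>y. h y \<partial>M) + \<epsilon>) + B"
proof -
  define c where "c = (\<integral>y. h y \<partial>M)"
  define g where "g = (\<lambda>y. h y - c - \<epsilon>)"
  have g_meas[measurable]: "g \<in> borel_measurable M" unfolding g_def by measurable
  define K' where "K' = K + \<bar>c\<bar> + \<epsilon>"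
  have gb: "\<bar>g y\<bar> \<le> K'" for y using hb[of y] e unfolding g_def K'_def by linarith
  have K': "0 \<le> K'" using gb[of undefined] by simp
  have Sg: "S g n x = S h n x - n * (c + \<epsilon>)" for n x
    unfolding S_def g_def by (simp add: sum_subtractf algebra_simps)
  define D where "D = {x\<in>space M. \<forall>B::nat. \<exists>n. real B < S g n x}"
  have D_sets[measurable]: "D \<in> sets M" unfolding D_def by measurable
  have inv: "T x \<in> D \<longleftrightarrow> x \<in> D" if x: "x \<in> space M" for x
  proof
    assume Tx: "T x \<in> D"
    show "x \<in> D" unfolding D_def
    proof (safe intro!: x)
      fix B :: nat
      obtain n where "real (B + nat \<lceil>\<bar>g x\<bar>\<rceil>) < S g n (T x)" using Tx unfolding D_def by blast
      then have "real B < g x + S g n (T x)" by linarith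
      then show "\<exists>n. real B < S g n x" by (metis S_Suc)
    qed
  next
    assume xD: "x \<in> D"
    show "T x \<in> D" unfolding D_def
    proof (safe intro!: T_space x)
      fix B :: nat
      obtain n where n: "real (B + nat \<lceil>\<bar>g x\<bar>\<rceil>) < S g n x" using xD unfolding D_def by blast
      have "n \<noteq> 0"
      proof
        assume "n = 0"
        then have "real (B + nat \<lceil>\<bar>g x\<bar>\<rceil>) < 0" using n by (simp add: S_def)
        then show False by linarith
      qed
      then obtain m where m: "n = Suc m" by (cases n) auto
      have "real B < S g n x - g x" using n by linarith
      then show "\<exists>n. real B < S g n (T x)" using m by (auto simp: S_Suc)
    qed
  qed
  have invn: "(T ^^ i) x \<in> D \<longleftrightarrow> x \<in> D" if x: "x \<in> space M" for x i
  proof (induction i)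
    case 0 then show ?case by simp
  next
    case (Suc i) then show ?case using inv[OF Tn_space[OF x, of i]] by simp
  qed
  have "T -` D \<inter> space M = D" using inv D_sets sets.sets_into_space T_space by blast
  then have D01: "measure M D = 0 \<or> measure M D = 1" using erg D_sets by blast
  define G where "G = (\<lambda>y. if y \<in> D then g y else 0)"
  have G_meas[measurable]: "G \<in> borel_measurable M" unfolding G_def by measurable
  have Gb: "\<bar>G y\<bar> \<le> K'" for y using gb K' unfolding G_def by auto
  have SG: "S G n x = (if x \<in> D then S g n x else 0)" if x: "x \<in> space M" for n x
    unfolding S_def G_def using invn[OF x] by simp
  define s where "s = (\<lambda>n x. if 0 < Mx G n x then G x else 0)"
  have s_meas[measurable]: "s n \<in> borel_measurable M" for n unfolding s_def by measurable
  have lim: "AE x in M. (\<lambda>n. s n x) \<longlonglongrightarrow> G x"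
  proof (rule AE_I2)
    fix x assume x: "x \<in> space M"
    show "(\<lambda>n. s n x) \<longlonglongrightarrow> G x"
    proof (cases "x \<in> D")
      case True
      then obtain k where k: "real 0 < S g k x" unfolding D_def by blast
      have "eventually (\<lambda>n. s n x = G x) sequentially"
        unfolding eventually_sequentially
      proof (intro exI allI impI)
        fix n assume "k \<le> n"
        then have "S G k x \<le> Mx G n x" by (rule Mx_ge)
        then have "0 < Mx G n x" using k SG[OF x, of k] True by simp
        then show "s n x = G x" unfolding s_def by simp
      qed
      then show ?thesis by (rule tendsto_eventually)
    next
      case False
      then have "s n x = G x" for n unfolding s_def G_def by simp
      then show ?thesis by simp
    qed
  qed
  have "(\<lambda>n. (\<integral>x. s n x \<partial>M)) \<longlonglongrightarrow> (\<integral>x. G x \<partial>M)"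
  proof (rule integral_dominated_convergence[where w="\<lambda>x. K'"])
    show "AE x in M. norm (s n x) \<le> K'" for n using Gb K' unfolding s_def by auto
  qed (use lim in auto)
  moreover have "0 \<le> (\<integral>x. s n x \<partial>M)" for n
    unfolding s_def by (rule maximal_ergodic[OF G_meas Gb])
  ultimately have G_nn: "0 \<le> (\<integral>x. G x \<partial>M)" by (intro LIMSEQ_le_const) auto
  have hint: "integrable M h" using hb by (intro integrable_const_bound[of h K]) auto
  have "measure M D \<noteq> 1"
  proof
    assume "measure M D = 1"
    then have "AE x in M. x \<in> D" using prob_space D_sets
      by (metis AE_prob_1)
    then have "(\<integral>x. G x \<partial>M) = (\<integral>x. g x \<partial>M)" by (intro integral_cong_AE) (auto simp: G_def)
    also have "\<dots> = c - c - \<epsilon>" unfolding g_def c_def using hint by (simp add: prob_space)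
    finally show False using G_nn e by simp
  qed
  with D01 have "measure M D = 0" by simp
  then have "AE x in M. x \<notin> D"
    using D_sets by (intro AE_I'[of D]) (auto simp: emeasure_eq_measure)
  then show ?thesis
  proof (rule AE_mp, intro AE_I2 impI)
    fix x assume x: "x \<in> space M" and "x \<notin> D"
    then obtain B :: nat where B: "\<forall>n. S g n x \<le> real B" unfolding D_def by (auto simp: not_less)
    show "\<exists>B. \<forall>n. S h n x \<le> n * ((\<integral>y. h y \<partial>M) + \<epsilon>) + B"
      using B Sg unfolding c_def by (intro exI[of _ "real B"]) (auto simp: algebra_simps)
  qed
qed

end



lemma bound_aux:
  fixes x e R :: real
  assumes R: "2 \<le> R" and x: "1 \<le> x" and g: "R \<le> \<bar>e\<bar> \<Longrightarrow> \<bar>e\<bar> / R \<le> x"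
  shows "1 / x^2 \<le> (2*R^2+1) * inverse (1 + e^2)"
proof (cases "R \<le> \<bar>e\<bar>")
  case True
  have "1 \<le> \<bar>e\<bar>" using True R by linarith
  then have "1 * 1 \<le> \<bar>e\<bar> * \<bar>e\<bar>" by (intro mult_mono) auto
  then have e1: "1 \<le> e^2" by (simp add: power2_eq_square)
  have ep: "0 < \<bar>e\<bar>" using True R by linarith
  have "\<bar>e\<bar> / R \<le> x" by (rule g[OF True])
  then have "(\<bar>e\<bar> / R)^2 \<le> x^2" using ep R by (intro power_mono) auto
  then have "e^2 / R^2 \<le> x^2" by (simp add: power_divide)
  moreover have "0 < e^2 / R^2" using ep R by simp
  moreover have "0 < x^2" using x by simp
  ultimately have "1 / x^2 \<le> 1 / (e^2 / R^2)"
    by (intro divide_left_mono mult_pos_pos) auto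
  also have "\<dots> = R^2 / e^2" by simp
  also have "\<dots> \<le> (2*R^2+1) / (1 + e^2)"
  proof -
    have "R^2 * (1 + e^2) \<le> (2*R^2+1) * e^2"
    proof -
      have "R^2 * 1 \<le> R^2 * e^2" using e1 by (intro mult_left_mono) auto
      moreover have "0 \<le> e^2" by simp
      moreover have "(2*R^2+1)*e^2 = R^2*e^2 + R^2*e^2 + e^2" by algebra
      moreover have "R^2*(1+e^2) = R^2 + R^2*e^2" by algebra
      moreover have "0 \<le> R^2 * e^2" by simp
      ultimately show ?thesis by linarith
    qed
    moreover have p1: "0 < e^2" using ep by simp
    moreover have p2: "0 < 1 + e^2" using ep by (simp add: add_pos_nonneg)
    ultimately have "R^2 \<le> (2*R^2+1) * e^2 / (1 + e^2)" by (simp add: pos_le_divide_eq)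
    then have "R^2 \<le> (2*R^2+1) / (1 + e^2) * e^2" by simp
    then show ?thesis using p1 by (simp add: pos_divide_le_eq)
  qed
  finally show ?thesis by (simp add: divide_inverse)
next
  case False
  have "1 / x^2 \<le> 1" using x by simp
  also have "1 \<le> (2*R^2+1) / (1 + e^2)"
  proof -
    have "\<bar>e\<bar> \<le> \<bar>R\<bar>" using False R by linarith
    then have "e^2 \<le> R^2" by (simp only: abs_le_square_iff)
    moreover have "0 \<le> R^2" by simp
    ultimately have "1 + e^2 \<le> 2*R^2+1" by linarith
    moreover have "0 < 1 + e^2" by (simp add: add_pos_nonneg)
    ultimately show ?thesis by (simp add: le_divide_eq)
  qed
  finally show ?thesis by (simp add: divide_inverse)
qed

lemma integrable_W: "integrable lborel (\<lambda>x::real. K * inverse (1 + x^2))"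
proof -
  have "set_integrable lborel (einterval (-\<infinity>) \<infinity>) (\<lambda>x::real. inverse (1 + x^2))"
    by (rule integrable_inverse_1_plus_square)
  then have "integrable lborel (\<lambda>x::real. inverse (1 + x^2))"
    by (simp add: set_integrable_def einterval_iff)
  then show ?thesis by (rule integrable_mult_right)
qed




lemma opnorm_mat1: "opnorm (mat 1 :: real^2^2) = 1"
  unfolding opnorm_def matrix_vector_mul_lid by (simp add: onorm_id)

theorem theorem3p8:
  fixes M :: "'a measure" and phi :: "'a \<Rightarrow> 'a" and f :: "'a \<Rightarrow> real"
  assumes "prob_space M"
    and "phi \<in> M \<rightarrow>\<^sub>M M"
    and "bij_betw phi (space M) (space M)"
    and "the_inv_into (space M) phi \<in> M \<rightarrow>\<^sub>M M"
    and "distr M M phi = M"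
    and "\<forall>A \<in> sets M. phi -` A \<inter> space M = A \<longrightarrow> measure M A = 0 \<or> measure M A = 1"
    and "f \<in> borel_measurable M"
    and "\<exists>C. \<forall>\<omega> \<in> space M. \<bar>f \<omega>\<bar> \<le> C"
    and "continuous_on UNIV (lyap M phi f)"
  shows "\<exists>E0. (\<forall>E. lyap M phi f E0 \<le> lyap M phi f E) \<and>
    (AE \<omega> in M.
       0 \<le> liminf (\<lambda>N. ereal (- (1 / real N) * ln (Iint phi f N \<omega>))) \<and>
       liminf (\<lambda>N. ereal (- (1 / real N) * ln (Iint phi f N \<omega>)))
         \<le> limsup (\<lambda>N. ereal (- (1 / real N) * ln (Iint phi f N \<omega>))) \<and>
       limsup (\<lambda>N. ereal (- (1 / real N) * ln (Iint phi f N \<omega>)))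
         \<le> ereal (2 * lyap M phi f E0))"
proof -
  interpret mpt M phi using assms(1,2,5,6) by (simp add: mpt_def mpt_axioms_def)
  note fmeas[measurable] = assms(7)
  obtain C where C: "\<And>\<omega>. \<omega> \<in> space M \<Longrightarrow> \<bar>f \<omega>\<bar> \<le> C" using assms(8) by blast
  have C0: "0 \<le> C"
  proof -
    obtain x where "x \<in> space M" using not_empty by blast
    then show ?thesis using C[of x] by simp
  qed
  have potC: "\<bar>pot phi f \<omega> i\<bar> \<le> C" if "\<omega> \<in> space M" for \<omega> i
    unfolding pot_def using C Tn_space that by blast
  have potK: "\<bar>pot phi f \<omega> i - E\<bar> + 2 \<le> C + \<bar>E\<bar> + 2" if "\<omega> \<in> space M" for \<omega> i E
    using potC[OF that, of i] by linarith
  have pot_meas: "(\<lambda>\<omega>. pot phi f \<omega> n) \<in> borel_measurable M" for n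
    unfolding pot_def by (rule measurable_compose[OF Tn_meas fmeas])
  have ell_meas[measurable]: "(\<lambda>\<omega>. ell phi f n \<omega> E) \<in> borel_measurable M" for n E
    unfolding ell_def
    by (rule borel_measurable_ln, rule opnorm_transfer_meas[of phi f "\<lambda>x. x" M "\<lambda>x. E" n])
       (simp_all add: pot_meas)
  have ell_bd: "\<bar>ell phi f n \<omega> E\<bar> \<le> n * ln (C + \<bar>E\<bar> + 2)" if "\<omega> \<in> space M" for n \<omega> E
    using ell_le[OF potK[OF that], of n] ell_nonneg[of phi f n \<omega> E] by simp
  have ell_int: "integrable M (\<lambda>\<omega>. ell phi f n \<omega> E)" for n E
    by (rule integrable_const_bound[of _ "n * ln (C + \<bar>E\<bar> + 2)"]) (auto intro!: AE_I2 ell_bd)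
  have ell_intT: "integrable M (\<lambda>\<omega>. ell phi f m ((phi ^^ n) \<omega>) E)" for n m E
  proof (rule integrable_const_bound[of _ "m * ln (C + \<bar>E\<bar> + 2)"])
    show "(\<lambda>\<omega>. ell phi f m ((phi ^^ n) \<omega>) E) \<in> borel_measurable M"
      by (rule measurable_compose[OF Tn_meas ell_meas])
  qed (auto intro!: AE_I2 ell_bd Tn_space)
  define a where "a n E = (\<integral>\<omega>. ell phi f n \<omega> E \<partial>M)" for n E
  have a_sub: "a (n + m) E \<le> a n E + a m E" for n m E
  proof -
    have "a (n + m) E \<le> (\<integral>\<omega>. ell phi f n \<omega> E + ell phi f m ((phi ^^ n) \<omega>) E \<partial>M)"
      unfolding a_def
    proof (rule integral_mono)
      show "integrable M (\<lambda>\<omega>. ell phi f n \<omega> E + ell phi f m ((phi ^^ n) \<omega>) E)"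
        by (rule Bochner_Integration.integrable_add[OF ell_int ell_intT])
    qed (auto simp: ell_int ell_sub)
    also have "\<dots> = a n E + (\<integral>\<omega>. ell phi f m ((phi ^^ n) \<omega>) E \<partial>M)"
      unfolding a_def
      by (rule Bochner_Integration.integral_add[OF ell_int ell_intT])
    also have "(\<integral>\<omega>. ell phi f m ((phi ^^ n) \<omega>) E \<partial>M) = a m E"
      unfolding a_def by (rule integral_Tn) (rule ell_meas)
    finally show ?thesis .
  qed
  have a_nn: "0 \<le> a n E" for n E unfolding a_def by (intro integral_nonneg_AE AE_I2 ell_nonneg)
  have a0: "a 0 E = 0" for E unfolding a_def ell_def by (simp add: opnorm_mat1)
  have conv: "(\<lambda>n. a n E / n) \<longlonglongrightarrow> (INF n\<in>{1..}. a n E / n)" for E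
    by (rule fekete[OF a_sub a_nn a0])
  have bdd: "bdd_below ((\<lambda>n. a n E / n) ` {1..})" for E
    by (rule bdd_belowI[of _ 0]) (auto intro: a_nn divide_nonneg_nonneg)
  have lyap_eq: "lyap M phi f E = (INF n\<in>{1..}. a n E / n)" for E
  proof -
    have "lyap M phi f E = lim (\<lambda>n. a n E / n)"
      unfolding lyap_def a_def ell_def by simp
    then show ?thesis using conv[of E] by (simp add: limI)
  qed
  have lyap_approx: "\<exists>k\<ge>1. a k E / k < lyap M phi f E + \<epsilon>" if "0 < \<epsilon>" for E \<epsilon>
  proof -
    have "(INF n\<in>{1..}. a n E / n) < lyap M phi f E + \<epsilon>" using lyap_eq that by simp
    then show ?thesis using bdd[of E] by (subst (asm) cINF_less_iff) auto
  qed
  have lyap_ge: "ln (\<bar>E\<bar> - C - 1) \<le> lyap M phi f E" if E: "C + 2 \<le> \<bar>E\<bar>" for E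
  proof -
    have "ln (\<bar>E\<bar> - C - 1) \<le> a n E / n" if n: "n \<in> {1..}" for n
    proof -
      have "n * ln (\<bar>E\<bar> - C - 1) \<le> ell phi f n \<omega> E" if "\<omega> \<in> space M" for \<omega>
      proof -
        have "(\<bar>E\<bar> - C - 1) ^ n \<le> opnorm (transfer phi f n \<omega> E)"
          by (rule opnorm_growth[OF potC[OF that] E])
        then have "ln ((\<bar>E\<bar> - C - 1) ^ n) \<le> ell phi f n \<omega> E"
          unfolding ell_def using E opnorm_transfer_pos[of phi f n \<omega> E] by (subst ln_le_cancel_iff) auto
        then show ?thesis using E by (simp add: ln_realpow)
      qed
      then have "(\<integral>\<omega>. n * ln (\<bar>E\<bar> - C - 1) \<partial>M) \<le> a n E"
        unfolding a_def by (intro integral_mono ell_int) auto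
      then have "n * ln (\<bar>E\<bar> - C - 1) \<le> a n E" by (simp add: prob_space)
      then show ?thesis using n by (simp add: field_simps)
    qed
    then show ?thesis unfolding lyap_eq by (intro cINF_greatest) auto
  qed
  obtain E0 where E0: "\<forall>E. lyap M phi f E0 \<le> lyap M phi f E"
  proof -
    define R where "R = C + 2 + exp (lyap M phi f 0)"
    have R: "0 \<le> R" unfolding R_def using C0 by (simp add: add_nonneg_nonneg)
    obtain E0 where E0: "E0 \<in> {-R..R}" "\<forall>E\<in>{-R..R}. lyap M phi f E0 \<le> lyap M phi f E"
      using continuous_attains_inf[of "{-R..R}" "lyap M phi f"] continuous_on_subset[OF assms(9)] R
      by auto
    have "lyap M phi f E0 \<le> lyap M phi f E" for E
    proof (cases "E \<in> {-R..R}")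
      case True then show ?thesis using E0 by auto
    next
      case False
      then have ER: "R \<le> \<bar>E\<bar>" by auto
      then have "C + 2 \<le> \<bar>E\<bar>" unfolding R_def by (smt (verit) exp_gt_zero)
      then have "ln (\<bar>E\<bar> - C - 1) \<le> lyap M phi f E" by (rule lyap_ge)
      moreover have "lyap M phi f 0 \<le> ln (\<bar>E\<bar> - C - 1)"
      proof -
        have "exp (lyap M phi f 0) \<le> \<bar>E\<bar> - C - 1" using ER unfolding R_def by simp
        then show ?thesis by (metis exp_gt_zero exp_le_cancel_iff exp_ln order.strict_trans2)
      qed
      moreover have "lyap M phi f E0 \<le> lyap M phi f 0" using E0 R by auto
      ultimately show ?thesis by linarith
    qed
    then show ?thesis using that by blast
  qed
  define L0 where "L0 = lyap M phi f E0"
  define R0 where "R0 = C + 2"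
  have R0: "2 \<le> R0" unfolding R0_def using C0 by simp
  define W where "W = (\<lambda>x::real. (2*R0^2+1) * inverse (1 + x^2))"
  have W_int: "integrable lborel W" unfolding W_def by (rule integrable_W)
  have W_nn: "0 \<le> W x" for x unfolding W_def by (simp add: add_pos_nonneg less_imp_le)
  define g where "g N \<omega> E = 1 / (opnorm (transfer phi f N \<omega> E))^2" for N \<omega> E
  have Iint_g: "Iint phi f N \<omega> = (\<integral>E. g N \<omega> E \<partial>lborel)" for N \<omega>
    unfolding Iint_def g_def ..
  have g_meas[measurable]: "(\<lambda>E. g N \<omega> E) \<in> borel_measurable lborel" for N \<omega>
  proof -
    have [measurable]: "(\<lambda>E. opnorm (transfer phi f N \<omega> E)) \<in> borel_measurable lborel"
      by (rule opnorm_transfer_meas[of phi f "\<lambda>x. \<omega>" lborel "\<lambda>x. x" N]) auto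
    show ?thesis unfolding g_def by measurable
  qed
  have g_nn: "0 \<le> g N \<omega> E" for N \<omega> E unfolding g_def by simp
  have g_le: "g N \<omega> E \<le> W E" if \<omega>: "\<omega> \<in> space M" and N: "1 \<le> N" for N \<omega> E
    unfolding g_def W_def
  proof (rule bound_aux[OF R0 opnorm_transfer_ge1])
    assume E: "R0 \<le> \<bar>E\<bar>"
    have E': "C + 2 \<le> \<bar>E\<bar>" using E unfolding R0_def .
    have "\<bar>E\<bar> / R0 \<le> \<bar>E\<bar> - C - 1"
    proof -
      have "0 \<le> (R0 - 1) * (\<bar>E\<bar> - R0)" using E R0 by simp
      then have "\<bar>E\<bar> \<le> (\<bar>E\<bar> - C - 1) * R0" unfolding R0_def by (simp add: algebra_simps)
      then show ?thesis using R0 by (simp add: pos_divide_le_eq)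
    qed
    also have "\<dots> = (\<bar>E\<bar> - C - 1) ^ 1" by simp
    also have "\<dots> \<le> (\<bar>E\<bar> - C - 1) ^ N" using E' N by (intro power_increasing) auto
    also have "\<dots> \<le> opnorm (transfer phi f N \<omega> E)" by (rule opnorm_growth[OF potC[OF \<omega>] E'])
    finally show "\<bar>E\<bar> / R0 \<le> opnorm (transfer phi f N \<omega> E)" .
  qed
  have g_int: "integrable lborel (g N \<omega>)" if \<omega>: "\<omega> \<in> space M" and N: "1 \<le> N" for N \<omega>
    by (rule Bochner_Integration.integrable_bound[OF W_int]) (auto simp: g_nn W_nn intro!: AE_I2 g_le[OF \<omega> N])
  define IW where "IW = (\<integral>E. W E \<partial>lborel)"
  have I_le: "Iint phi f N \<omega> \<le> IW" if \<omega>: "\<omega> \<in> space M" and N: "1 \<le> N" for N \<omega>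
    unfolding Iint_g IW_def by (intro integral_mono g_int[OF \<omega> N] W_int g_le[OF \<omega> N])
  have I_nn: "0 \<le> Iint phi f N \<omega>" for N \<omega>
    unfolding Iint_g by (intro integral_nonneg_AE AE_I2 g_nn)
  define x where "x \<omega> N = - (1 / real N) * ln (Iint phi f N \<omega>)" for \<omega> N
  have lower: "0 \<le> liminf (\<lambda>N. ereal (x \<omega> N))" if \<omega>: "\<omega> \<in> space M" for \<omega>
  proof (rule ereal_le_epsilon2)
    fix e :: real assume e: "0 < e"
    define m where "m = max 0 (ln IW)"
    have m: "0 \<le> m" unfolding m_def by simp
    have lnI: "ln (Iint phi f N \<omega>) \<le> m" if N: "1 \<le> N" for N
    proof (cases "Iint phi f N \<omega> = 0")
      case True then show ?thesis using m by simp
    next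
      case False
      then have "0 < Iint phi f N \<omega>" using I_nn[of N \<omega>] by simp
      then have "ln (Iint phi f N \<omega>) \<le> ln IW" using I_le[OF \<omega> N] by simp
      then show ?thesis unfolding m_def by simp
    qed
    obtain N0 :: nat where N0: "m / e < N0" using reals_Archimedean2 by blast
    have "eventually (\<lambda>N. ereal (- e) \<le> ereal (x \<omega> N)) sequentially"
      unfolding eventually_sequentially
    proof (intro exI[of _ "Suc N0"] allI impI)
      fix N assume N: "Suc N0 \<le> N"
      then have N1: "1 \<le> N" and Np: "0 < real N" by auto
      have "m < e * N0" using N0 e by (simp add: pos_divide_less_eq mult.commute)
      moreover have "e * N0 \<le> e * N" using N e by (intro mult_left_mono) auto
      ultimately have "m < e * N" by linarith
      then have "m / N \<le> e" using Np by (simp add: pos_divide_le_eq mult.commute)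
      moreover have "ln (Iint phi f N \<omega>) / N \<le> m / N" using lnI[OF N1] Np by (simp add: divide_right_mono)
      ultimately show "ereal (- e) \<le> ereal (x \<omega> N)" unfolding x_def by simp
    qed
    then have "ereal (- e) \<le> liminf (\<lambda>N. ereal (x \<omega> N))" by (rule Liminf_bounded)
    then show "0 \<le> liminf (\<lambda>N. ereal (x \<omega> N)) + ereal e"
      by (cases "liminf (\<lambda>N. ereal (x \<omega> N))") auto
  qed
  have upper: "AE \<omega> in M. limsup (\<lambda>N. ereal (x \<omega> N)) \<le> ereal (2 * L0 + \<eta>)" if \<eta>: "0 < \<eta>" for \<eta>
  proof -
    obtain k where k1: "1 \<le> k" and k: "a k E0 / k < L0 + \<eta>/8"
      using lyap_approx[of "\<eta>/8" E0] \<eta> unfolding L0_def by auto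
    have kp: "0 < real k" using k1 by simp
    define K where "K = C + \<bar>E0\<bar> + 3"
    have K1: "1 \<le> K" unfolding K_def using C0 by simp
    define cst where "cst = ln K"
    have cst: "0 \<le> cst" unfolding cst_def using K1 by simp
    have Kk: "0 < K ^ k" using K1 by simp
    define \<delta> where "\<delta> = min 1 (\<eta> / (8 * K^k))"
    have \<delta>0: "0 < \<delta>" unfolding \<delta>_def using \<eta> Kk by simp
    have \<delta>1: "\<delta> \<le> 1" unfolding \<delta>_def by simp
    have \<delta>K: "K^k * \<delta> \<le> \<eta>/8"
    proof -
      have "\<delta> \<le> \<eta> / (8 * K^k)" unfolding \<delta>_def by simp
      then have "K^k * \<delta> \<le> K^k * (\<eta> / (8 * K^k))" using Kk by (intro mult_left_mono) auto
      also have "\<dots> = \<eta>/8" using Kk K1 by simp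
      finally show ?thesis .
    qed
    define h where "h = (\<lambda>\<omega>. if \<omega> \<in> space M then ell phi f k \<omega> E0 else 0)"
    have h_meas: "h \<in> borel_measurable M"
      by (rule measurable_cong[THEN iffD1, OF _ ell_meas[of k E0]]) (simp add: h_def)
    have hb: "\<bar>h y\<bar> \<le> k * ln (C + \<bar>E0\<bar> + 2)" for y
    proof (cases "y \<in> space M")
      case True then show ?thesis using ell_bd[OF True] unfolding h_def by simp
    next
      case False
      have "0 \<le> ln (C + \<bar>E0\<bar> + 2)" using C0 by simp
      then show ?thesis using False unfolding h_def by simp
    qed
    have hint: "(\<integral>\<omega>. h \<omega> \<partial>M) = a k E0"
      unfolding a_def by (rule Bochner_Integration.integral_cong) (auto simp: h_def)
    have keta: "0 < real k * \<eta> / 8" using kp \<eta> by simp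
    have birk: "AE \<omega> in M. \<exists>B. \<forall>n. S h n \<omega> \<le> n * ((\<integral>y. h y \<partial>M) + real k * \<eta> / 8) + B"
      by (rule birkhoff_upper[OF h_meas hb keta])
    show ?thesis
      using birk
    proof (rule AE_mp, intro AE_I2 impI)
      fix \<omega> assume \<omega>: "\<omega> \<in> space M"
        and "\<exists>B. \<forall>n. S h n \<omega> \<le> n * ((\<integral>y. h y \<partial>M) + real k * \<eta> / 8) + B"
      then obtain B where B: "\<And>n. S h n \<omega> \<le> n * (a k E0 + real k * \<eta> / 8) + B"
        unfolding hint by blast
      define B1 where "B1 = B / k + 2 * k * cst"
      have potJ: "\<bar>pot phi f ((phi ^^ j) \<omega>) i - E\<bar> + 2 \<le> K" if "\<bar>E - E0\<bar> \<le> 1" for j i E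
        using potC[OF Tn_space[OF \<omega>], of j i] that unfolding K_def by linarith
      have ellU: "ell phi f N \<omega> E \<le> N * (L0 + 3 * \<eta> / 8) + B1" if E: "\<bar>E - E0\<bar> \<le> \<delta>" for N E
      proof -
        have E1: "\<bar>E - E0\<bar> \<le> 1" using E \<delta>1 by simp
        define l where "l n j = ell phi f n ((phi ^^ j) \<omega>) E" for n j
        have shift: "(phi ^^ n) ((phi ^^ j) \<omega>) = (phi ^^ (j + n)) \<omega>" for n j
          by (metis add.commute comp_apply funpow_add)
        have blk: "k * l N 0 \<le> (\<Sum>i<N. l k i) + 2 * (real k)^2 * cst"
        proof (rule block_ineq)
          show "l (n + m) j \<le> l n j + l m (j + n)" for n m j
            unfolding l_def using ell_sub[of phi f n m "(phi ^^ j) \<omega>" E] shift by simp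
          show "0 \<le> l n j" for n j unfolding l_def by (rule ell_nonneg)
          show "l n j \<le> n * cst" for n j
            unfolding l_def cst_def by (rule ell_le[OF potJ[OF E1]])
        qed (use k1 in simp)
        have lk: "l k i \<le> h ((phi ^^ i) \<omega>) + k * K^k * \<delta>" for i
        proof -
          have "l k i \<le> ell phi f k ((phi ^^ i) \<omega>) E0 + k * K^k * \<bar>E - E0\<bar>"
            unfolding l_def by (rule ell_lip[OF potJ[OF E1] potJ]) simp
          also have "k * K^k * \<bar>E - E0\<bar> \<le> k * K^k * \<delta>"
            using E Kk by (intro mult_left_mono) auto
          finally show ?thesis unfolding h_def using Tn_space[OF \<omega>] by simp
        qed
        have "(\<Sum>i<N. l k i) \<le> (\<Sum>i<N. h ((phi ^^ i) \<omega>) + k * K^k * \<delta>)"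
          by (intro sum_mono lk)
        also have "\<dots> = S h N \<omega> + N * (k * K^k * \<delta>)" by (simp add: S_def sum.distrib)
        finally have sum_le: "(\<Sum>i<N. l k i) \<le> S h N \<omega> + N * (k * K^k * \<delta>)" .
        have ak: "a k E0 \<le> k * (L0 + \<eta>/8)" using k kp by (simp add: pos_divide_less_eq mult.commute less_imp_le)
        have f1: "N * a k E0 \<le> N * (k * (L0 + \<eta>/8))" using ak by (intro mult_left_mono) auto
        have f2: "N * (k * K^k * \<delta>) \<le> N * (k * (\<eta>/8))"
        proof -
          have "k * (K^k * \<delta>) \<le> k * (\<eta>/8)" using \<delta>K by (intro mult_left_mono) auto
          then show ?thesis by (intro mult_left_mono) (auto simp: mult.assoc)
        qed
        have c1: "k * ell phi f N \<omega> E \<le> S h N \<omega> + N * (k * K^k * \<delta>) + 2 * (real k)^2 * cst"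
          using blk sum_le unfolding l_def by simp
        have e1: "N * (a k E0 + real k * \<eta> / 8) = N * a k E0 + N * (real k * (\<eta> / 8))"
          by (simp add: algebra_simps)
        have e2: "N * (k * (L0 + \<eta>/8)) = N * (k * L0) + N * (real k * (\<eta>/8))"
          by (simp add: algebra_simps)
        have e3: "k * (N * (L0 + 3 * \<eta> / 8) + B1) = N * (k * L0) + 3 * (N * (real k * (\<eta>/8))) + B + 2 * (real k)^2 * cst"
          unfolding B1_def using kp by (simp add: algebra_simps power2_eq_square)
        have "k * ell phi f N \<omega> E \<le> k * (N * (L0 + 3 * \<eta> / 8) + B1)"
          using c1 B[of N] f1 f2 e1 e2 e3 by argo
        then show ?thesis using kp by (simp add: mult_le_cancel_left_pos)
      qed
      have I_ge: "2 * \<delta> * exp (- 2 * (N * (L0 + 3 * \<eta> / 8) + B1)) \<le> Iint phi f N \<omega>"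
        if N: "1 \<le> N" for N
      proof -
        define U where "U = N * (L0 + 3 * \<eta> / 8) + B1"
        define J where "J = {E0 - \<delta> .. E0 + \<delta>}"
        have gJ: "exp (- 2 * U) * indicator J E \<le> g N \<omega> E" for E
        proof (cases "E \<in> J")
          case True
          then have "\<bar>E - E0\<bar> \<le> \<delta>" unfolding J_def by auto
          then have le: "ell phi f N \<omega> E \<le> U" unfolding U_def by (rule ellU)
          have op: "opnorm (transfer phi f N \<omega> E) = exp (ell phi f N \<omega> E)"
            unfolding ell_def using opnorm_transfer_pos[of phi f N \<omega> E] by simp
          have "(opnorm (transfer phi f N \<omega> E))^2 = exp (2 * ell phi f N \<omega> E)"
            unfolding op by (simp add: exp_double[symmetric] power2_eq_square exp_add[symmetric])
          also have "\<dots> \<le> exp (2 * U)" using le by simp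
          finally have "(opnorm (transfer phi f N \<omega> E))^2 \<le> exp (2 * U)" .
          then have "1 / exp (2 * U) \<le> g N \<omega> E"
            unfolding g_def using opnorm_transfer_pos[of phi f N \<omega> E]
            by (intro divide_left_mono) auto
          then show ?thesis using True by (simp add: exp_minus divide_inverse)
        next
          case False then show ?thesis by (simp add: g_nn)
        qed
        have "(\<integral>E. exp (- 2 * U) * indicator J E \<partial>lborel) \<le> (\<integral>E. g N \<omega> E \<partial>lborel)"
        proof (rule integral_mono[OF _ g_int[OF \<omega> N] gJ])
          show "integrable lborel (\<lambda>E. exp (- 2 * U) * indicator J E)"
            unfolding J_def by (intro integrable_mult_right integrable_real_indicator) (auto simp: emeasure_lborel_Icc_eq)
        qed
        moreover have "(\<integral>E. exp (- 2 * U) * indicator J E \<partial>lborel) = exp (- 2 * U) * (2 * \<delta>)"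
          unfolding J_def using \<delta>0 by simp
        ultimately show ?thesis unfolding Iint_g U_def by (simp add: mult.commute mult.left_commute)
      qed
      define c0 where "c0 = 2 * B1 - ln (2 * \<delta>)"
      have xN: "x \<omega> N \<le> 2 * (L0 + 3 * \<eta> / 8) + c0 / N" if N: "1 \<le> N" for N
      proof -
        have pos: "0 < 2 * \<delta> * exp (- 2 * (N * (L0 + 3 * \<eta> / 8) + B1))" using \<delta>0 by simp
        then have "ln (2 * \<delta> * exp (- 2 * (N * (L0 + 3 * \<eta> / 8) + B1))) \<le> ln (Iint phi f N \<omega>)"
          using I_ge[OF N] by (subst ln_le_cancel_iff) auto
        then have "ln (2 * \<delta>) - 2 * (N * (L0 + 3 * \<eta> / 8) + B1) \<le> ln (Iint phi f N \<omega>)"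
          using \<delta>0 by (simp add: ln_mult_pos)
        then have "- ln (Iint phi f N \<omega>) \<le> N * (2 * (L0 + 3 * \<eta> / 8)) + c0"
          unfolding c0_def by (simp add: algebra_simps)
        then have "- ln (Iint phi f N \<omega>) / N \<le> (N * (2 * (L0 + 3 * \<eta> / 8)) + c0) / N"
          using N by (intro divide_right_mono) auto
        then show ?thesis unfolding x_def using N by (simp add: add_divide_distrib)
      qed
      obtain N0 :: nat where N0: "4 * \<bar>c0\<bar> / \<eta> < N0" using reals_Archimedean2 by blast
      have "eventually (\<lambda>N. ereal (x \<omega> N) \<le> ereal (2 * L0 + \<eta>)) sequentially"
        unfolding eventually_sequentially
      proof (intro exI[of _ "Suc N0"] allI impI)
        fix N assume N: "Suc N0 \<le> N"
        then have N1: "1 \<le> N" and Np: "0 < real N" by auto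
        have "4 * \<bar>c0\<bar> < \<eta> * N0" using N0 \<eta> by (simp add: pos_divide_less_eq mult.commute)
        moreover have "\<eta> * N0 \<le> \<eta> * N" using N \<eta> by (intro mult_left_mono) auto
        ultimately have "4 * \<bar>c0\<bar> < \<eta> * N" by linarith
        then have "c0 / N \<le> \<eta> / 4" using Np by (simp add: pos_divide_le_eq)
        then have "x \<omega> N \<le> 2 * L0 + \<eta>" using xN[OF N1] by argo
        then show "ereal (x \<omega> N) \<le> ereal (2 * L0 + \<eta>)" by simp
      qed
      then show "limsup (\<lambda>N. ereal (x \<omega> N)) \<le> ereal (2 * L0 + \<eta>)" by (rule Limsup_bounded)
    qed
  qed
  have upper_all: "AE \<omega> in M. \<forall>m::nat. limsup (\<lambda>N. ereal (x \<omega> N)) \<le> ereal (2 * L0 + 1 / Suc m)"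
    unfolding AE_all_countable by (intro allI upper) simp
  have main: "AE \<omega> in M.
       0 \<le> liminf (\<lambda>N. ereal (- (1 / real N) * ln (Iint phi f N \<omega>))) \<and>
       liminf (\<lambda>N. ereal (- (1 / real N) * ln (Iint phi f N \<omega>)))
         \<le> limsup (\<lambda>N. ereal (- (1 / real N) * ln (Iint phi f N \<omega>))) \<and>
       limsup (\<lambda>N. ereal (- (1 / real N) * ln (Iint phi f N \<omega>)))
         \<le> ereal (2 * lyap M phi f E0)"
    using upper_all
  proof (rule AE_mp, intro AE_I2 impI)
    fix \<omega> assume \<omega>: "\<omega> \<in> space M"
      and up: "\<forall>m::nat. limsup (\<lambda>N. ereal (x \<omega> N)) \<le> ereal (2 * L0 + 1 / Suc m)"
    have "limsup (\<lambda>N. ereal (x \<omega> N)) \<le> ereal (2 * L0)"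
    proof (rule ereal_le_epsilon2)
      fix e :: real assume e: "0 < e"
      obtain m :: nat where m: "1 / e < m" using reals_Archimedean2 by blast
      have "1 / real (Suc m) \<le> e"
      proof -
        have "1 / e < Suc m" using m by simp
        then have "1 < e * Suc m" using e by (simp add: pos_divide_less_eq mult.commute)
        then show ?thesis using e by (simp add: divide_le_eq mult.commute)
      qed
      then have "ereal (2 * L0 + 1 / Suc m) \<le> ereal (2 * L0) + ereal e" by simp
      then show "limsup (\<lambda>N. ereal (x \<omega> N)) \<le> ereal (2 * L0) + ereal e"
        using up by (meson order.trans)
    qed
    moreover have "liminf (\<lambda>N. ereal (x \<omega> N)) \<le> limsup (\<lambda>N. ereal (x \<omega> N))"
      by (rule Liminf_le_Limsup) simp
    ultimately show "0 \<le> liminf (\<lambda>N. ereal (- (1 / real N) * ln (Iint phi f N \<omega>))) \<and>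
       liminf (\<lambda>N. ereal (- (1 / real N) * ln (Iint phi f N \<omega>)))
         \<le> limsup (\<lambda>N. ereal (- (1 / real N) * ln (Iint phi f N \<omega>))) \<and>
       limsup (\<lambda>N. ereal (- (1 / real N) * ln (Iint phi f N \<omega>)))
         \<le> ereal (2 * lyap M phi f E0)"
      using lower[OF \<omega>] unfolding x_def L0_def by simp
  qed
  show ?thesis using E0 main by blast
qed

end
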